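(* Let $A$ be a finite multiset of $n$ points in $\mathbb{R}^d$ with mean $\mu$, let $\varepsilon,\delta\in(0,1)$, $b>0$, $k=b\log\delta^{-1}$ and $r=\frac{1}{11}\sqrt{\frac{\varepsilon\,\mathrm{Opt}}{n}}$. Let $\hat\mu_1,\dots,\hat\mu_k\in\mathbb{R}^d$ be points such that at least $\frac{7}{10}b\log\delta^{-1}$ indices $i$ satisfy $\|\hat\mu_i-\mu\|\le r$. Let $m$ be the coordinate-wise median of $\hat\mu_1,\dots,\hat\mu_k$. Then $\|m-\mu\|\le b\log\delta^{-1}\cdot r$.
   Context: $\mu=\frac1n\sum_{p\in A}p$, $\mathrm{Opt}=\sum_{p\in A}\|p-\mu\|^2$. The coordinate-wise median $m$ is the point whose $l$-th coordinate, for each $l\in\{1,\dots,d\}$, is a median of the multiset $\{(\hat\mu_1)_l,\dots,(\hat\mu_k)_l\}$ (chosen among these values). *)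

theory Defs
  imports "HOL-Analysis.Analysis" "HOL-Library.Multiset"
begin

definition mset_mean :: "(real^'d) multiset \<Rightarrow> real^'d" where
  "mset_mean A = (1 / real (size A)) *\<^sub>R sum_mset A"

definition mset_opt :: "(real^'d) multiset \<Rightarrow> real" where
  "mset_opt A = sum_mset (image_mset (\<lambda>p. (norm (p - mset_mean A))\<^sup>2) A)"

definition is_median_of :: "nat \<Rightarrow> (nat \<Rightarrow> real) \<Rightarrow> real \<Rightarrow> bool" where
  "is_median_of k x v \<longleftrightarrow> v \<in> x ` {..<k}
     \<and> real (card {i\<in>{..<k}. x i \<le> v}) \<ge> real k / 2
     \<and> real (card {i\<in>{..<k}. x i \<ge> v}) \<ge> real k / 2"

definition is_coordinatewise_median :: "nat \<Rightarrow> (nat \<Rightarrow> real^'d) \<Rightarrow> real^'d \<Rightarrow> bool" where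
  "is_coordinatewise_median k mu m \<longleftrightarrow> (\<forall>l. is_median_of k (\<lambda>i. mu i $ l) (m $ l))"

end

theory Submission
  imports Defs
begin

lemma inter_nonempty:
  fixes k :: nat and S G :: "nat set"
  assumes "S \<subseteq> {..<k}" "G \<subseteq> {..<k}" "real (card S) \<ge> real k / 2"
    "real (card G) \<ge> 7/10 * real k" "k > 0"
  shows "\<exists>i. i \<in> S \<inter> G"
proof -
  have f: "finite S" "finite G" using assms finite_subset by blast+
  have "card (S \<union> G) \<le> k" using assms(1,2) by (metis card_lessThan card_mono finite_lessThan le_sup_iff)
  moreover have "card (S \<union> G) + card (S \<inter> G) = card S + card G" using card_Un_Int f by metis
  ultimately have "card (S \<inter> G) > 0" using assms(3-5) by linarith
  thus ?thesis by (metis card_gt_0_iff ex_in_conv)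
qed

lemma norm_sq_vec: "(norm (x :: real^'d))\<^sup>2 = (\<Sum>l\<in>UNIV. (x $ l)\<^sup>2)"
  unfolding norm_vec_def L2_set_def by (simp add: sum_nonneg)

theorem lemma3p5:
  fixes A :: "(real^'d) multiset" and n k :: nat and eps delta b r :: real
    and muhat :: "nat \<Rightarrow> real^'d" and m :: "real^'d"
  assumes "size A = n" and "n > 0"
    and "0 < eps" "eps < 1" "0 < delta" "delta < 1" "b > 0"
    and "real k = b * ln (1 / delta)"
    and "r = (1/11) * sqrt (eps * mset_opt A / real n)"
    and "real (card {i\<in>{..<k}. norm (muhat i - mset_mean A) \<le> r}) \<ge> 7/10 * b * ln (1 / delta)"
    and "is_coordinatewise_median k muhat m"
  shows "norm (m - mset_mean A) \<le> b * ln (1 / delta) * r"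
proof -
  define mu where "mu = mset_mean A"
  define G where "G = {i\<in>{..<k}. norm (muhat i - mu) \<le> r}"
  have Gsub: "G \<subseteq> {..<k}" unfolding G_def by auto
  have fG: "finite G" using Gsub finite_subset by blast
  have cG: "real (card G) \<ge> 7/10 * real k" using assms(8,10) unfolding G_def mu_def by simp
  have "ln (1/delta) > 0" using assms(5,6) by simp
  hence kpos: "real k > 0" using assms(7,8) by simp
  hence k0: "k > 0" by simp
  have "mset_opt A \<ge> 0"
  proof -
    have "sum_mset (image_mset (\<lambda>p. (0::real)) A) \<le> mset_opt A"
      unfolding mset_opt_def by (rule sum_mset_mono) simp
    thus ?thesis by simp
  qed
  hence "eps * mset_opt A / real n \<ge> 0" using assms(2,3) by simp
  hence "sqrt (eps * mset_opt A / real n) \<ge> 0" by simp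
  hence r0: "r \<ge> 0" using assms(9) by linarith
  have coord: "(m $ l - mu $ l)\<^sup>2 \<le> (\<Sum>i\<in>G. (muhat i $ l - mu $ l)\<^sup>2)" for l
  proof -
    have med: "is_median_of k (\<lambda>i. muhat i $ l) (m $ l)"
      using assms(11) unfolding is_coordinatewise_median_def by blast
    define S where "S = {i\<in>{..<k}. muhat i $ l \<ge> m $ l}"
    define T where "T = {i\<in>{..<k}. muhat i $ l \<le> m $ l}"
    have "real (card S) \<ge> real k / 2" "real (card T) \<ge> real k / 2"
      using med unfolding is_median_of_def S_def T_def by auto
    then obtain i j where i: "i \<in> S \<inter> G" and j: "j \<in> T \<inter> G"
      using inter_nonempty[OF _ Gsub _ cG k0, of S] inter_nonempty[OF _ Gsub _ cG k0, of T]
      unfolding S_def T_def by auto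
    have "(m $ l - mu $ l)\<^sup>2 \<le> (muhat i $ l - mu $ l)\<^sup>2 \<or> (m $ l - mu $ l)\<^sup>2 \<le> (muhat j $ l - mu $ l)\<^sup>2"
    proof (cases "m $ l \<ge> mu $ l")
      case True
      have "muhat i $ l \<ge> m $ l" using i unfolding S_def by auto
      hence "(m $ l - mu $ l)\<^sup>2 \<le> (muhat i $ l - mu $ l)\<^sup>2" using True
        by (intro power_mono) auto
      thus ?thesis by blast
    next
      case False
      have "muhat j $ l \<le> m $ l" using j unfolding T_def by auto
      hence "(mu $ l - m $ l)\<^sup>2 \<le> (mu $ l - muhat j $ l)\<^sup>2" using False
        by (intro power_mono) auto
      thus ?thesis by (simp add: power2_commute)
    qed
    moreover have "(muhat x $ l - mu $ l)\<^sup>2 \<le> (\<Sum>i\<in>G. (muhat i $ l - mu $ l)\<^sup>2)" if "x \<in> G" for x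
      using member_le_sum[OF that, of "\<lambda>i. (muhat i $ l - mu $ l)\<^sup>2"] fG by simp
    ultimately show ?thesis using i j by force
  qed
  have "(norm (m - mu))\<^sup>2 = (\<Sum>l\<in>UNIV. (m $ l - mu $ l)\<^sup>2)" by (simp add: norm_sq_vec)
  also have "\<dots> \<le> (\<Sum>l\<in>UNIV. \<Sum>i\<in>G. (muhat i $ l - mu $ l)\<^sup>2)" by (intro sum_mono coord)
  also have "\<dots> = (\<Sum>i\<in>G. (norm (muhat i - mu))\<^sup>2)" by (subst sum.swap) (simp add: norm_sq_vec)
  also have "\<dots> \<le> (\<Sum>i\<in>G. r\<^sup>2)"
    by (intro sum_mono power_mono) (auto simp: G_def)
  also have "\<dots> = real (card G) * r\<^sup>2" by simp
  also have "\<dots> \<le> real k * r\<^sup>2"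
  proof -
    have "card G \<le> k" using Gsub by (metis card_lessThan card_mono finite_lessThan)
    thus ?thesis by (intro mult_right_mono) auto
  qed
  also have "\<dots> \<le> (real k * r)\<^sup>2"
  proof -
    have "real k \<ge> 1" using k0 by simp
    hence "real k \<le> real k * real k" by simp
    hence "real k * r\<^sup>2 \<le> (real k * real k) * r\<^sup>2" by (intro mult_right_mono) auto
    thus ?thesis by (simp add: power_mult_distrib power2_eq_square mult_ac)
  qed
  finally have "norm (m - mu) \<le> real k * r"
    using r0 kpos by (meson power2_le_imp_le mult_nonneg_nonneg less_imp_le)
  thus ?thesis using assms(8) mu_def by simp
qed

end
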